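(* Let $f,g,\beta$ be functions with $\lim_{x\to\infty}f(x)=\lim_{x\to\infty}g(x)=\lim_{x\to\infty}\beta(x)=\infty$. If a problem $\Pi_0$ is $(f,g)$-FPT gap reducible to a problem $\Pi_1$ and $\Pi_0$ is $\beta$-weakly inherently enumerative, then there is a constant $c>0$ such that $\Pi_1$ is $(c\cdot\beta\circ g)$-weakly inherently enumerative.
   Context: An optimization problem $\Pi$ has instances $I$ with optimum value $\mathrm{OPT}_\Pi(I)$. $O_{q,r}(\cdot)$ hides a multiplicative factor depending only on $q,r$. $\Pi_0$ is $(f,g)$-FPT gap reducible to $\Pi_1$ if there is an algorithm that takes an instance $I_0$ of $\Pi_0$ and integers $q,r$, runs in time $t(q,r)\cdot|I_0|^{O(1)}$ for some computable $t$, and produces an instance $I_1$ of $\Pi_1$ such that: for every positive integer $q$, if $\mathrm{OPT}_{\Pi_0}(I_0)\ge q$ then $\mathrm{OPT}_{\Pi_1}(I_1)\ge f(q)$; and for every positive integer $r$, if $\mathrm{OPT}_{\Pi_0}(I_0)<g(r)$ then $\mathrm{OPT}_{\Pi_1}(I_1)<r$. For $\beta$ with $\beta(r)\to\infty$, $\Pi$ is $\beta$-weakly inherently enumerative if there is a constant $r_0>0$ such that for all integers $q\ge r\ge r_0$ no algorithm can, on every instance $I$, decide whether $\mathrm{OPT}_\Pi(I)<r$ or $\mathrm{OPT}_\Pi(I)\ge q$ in time $O_{q,r}(|I|^{\beta(r)})$. *)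

theory Defs
  imports Complex_Main
begin

datatype sym = Bl | Bit bool | Hash
datatype dir = L | R | S

text \<open>A machine is (number of states n, transition function). States are 0..<n,
  the start state is 0; a transition of None means: halt.\<close>
type_synonym tm = "nat \<times> (nat \<Rightarrow> sym \<Rightarrow> (nat \<times> sym \<times> dir) option)"

definition tm_wf :: "tm \<Rightarrow> bool" where
  "tm_wf M \<longleftrightarrow> 0 < fst M \<and>
     (\<forall>q<fst M. \<forall>a q' b d. snd M q a = Some (q', b, d) \<longrightarrow> q' < fst M)"

text \<open>Configuration: (state, tape left of head in reverse order, tape from head on).\<close>
type_synonym config = "nat \<times> sym list \<times> sym list"

fun head_sym :: "sym list \<Rightarrow> sym" where
  "head_sym [] = Bl"
| "head_sym (a # _) = a"

fun move :: "dir \<Rightarrow> sym list \<Rightarrow> sym list \<Rightarrow> sym list \<times> sym list" where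
  "move S l r = (l, r)"
| "move R l [] = (Bl # l, [])"
| "move R l (a # r) = (a # l, r)"
| "move L [] r = ([], r)"
| "move L (a # l) r = (l, a # r)"

fun tm_step :: "tm \<Rightarrow> config \<Rightarrow> config" where
  "tm_step M (q, l, r) =
     (case snd M q (head_sym r) of
        None \<Rightarrow> (q, l, r)
      | Some (q', b, d) \<Rightarrow> (let (l', r') = move d l (b # tl r) in (q', l', r')))"

fun halted :: "tm \<Rightarrow> config \<Rightarrow> bool" where
  "halted M (q, l, r) \<longleftrightarrow> snd M q (head_sym r) = None"

definition conf :: "tm \<Rightarrow> sym list \<Rightarrow> nat \<Rightarrow> config" where
  "conf M x t = (tm_step M ^^ t) (0, [], x)"

definition halts_within :: "tm \<Rightarrow> sym list \<Rightarrow> nat \<Rightarrow> bool" where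
  "halts_within M x t \<longleftrightarrow> halted M (conf M x t)"

text \<open>Function output convention: on halting the tape holds exactly the output word,
  starting at the head at the left end of the tape.\<close>
definition computes_within :: "tm \<Rightarrow> sym list \<Rightarrow> nat \<Rightarrow> bool list \<Rightarrow> bool" where
  "computes_within M x t y \<longleftrightarrow> halts_within M x t \<and>
     (case conf M x t of (q, l, r) \<Rightarrow> l = [] \<and> (\<exists>k. r = map Bit y @ replicate k Bl))"

text \<open>Decision convention: accept iff on halting the head reads the symbol 1.\<close>
definition accepts_within :: "tm \<Rightarrow> sym list \<Rightarrow> nat \<Rightarrow> bool" where
  "accepts_within M x t \<longleftrightarrow> halts_within M x t \<and>
     (case conf M x t of (q, l, r) \<Rightarrow> head_sym r = Bit True)"

definition rejects_within :: "tm \<Rightarrow> sym list \<Rightarrow> nat \<Rightarrow> bool" where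
  "rejects_within M x t \<longleftrightarrow> halts_within M x t \<and>
     (case conf M x t of (q, l, r) \<Rightarrow> head_sym r \<noteq> Bit True)"

fun bin :: "nat \<Rightarrow> bool list" where
  "bin n = (if n = 0 then [] else odd n # bin (n div 2))"

definition enc_word :: "bool list \<Rightarrow> sym list" where
  "enc_word w = map Bit w"

definition enc2 :: "nat \<Rightarrow> nat \<Rightarrow> sym list" where
  "enc2 q r = map Bit (bin q) @ [Hash] @ map Bit (bin r)"

definition enc3 :: "bool list \<Rightarrow> nat \<Rightarrow> nat \<Rightarrow> sym list" where
  "enc3 I q r = map Bit I @ [Hash] @ enc2 q r"

definition computable2 :: "(nat \<Rightarrow> nat \<Rightarrow> nat) \<Rightarrow> bool" where
  "computable2 t \<longleftrightarrow> (\<exists>M. tm_wf M \<and> (\<forall>q r. \<exists>s. computes_within M (enc2 q r) s (bin (t q r))))"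

record opt_problem =
  inst :: "bool list set"
  opt :: "bool list \<Rightarrow> real"

definition fpt_gap_reducible ::
  "(nat \<Rightarrow> nat) \<Rightarrow> (nat \<Rightarrow> nat) \<Rightarrow> opt_problem \<Rightarrow> opt_problem \<Rightarrow> bool" where
  "fpt_gap_reducible f g P0 P1 \<longleftrightarrow>
     (\<exists>M t d. tm_wf M \<and> computable2 t \<and>
        (\<forall>I0\<in>inst P0. \<forall>q r. 0 < q \<longrightarrow> 0 < r \<longrightarrow>
           (\<exists>I1 s. s \<le> t q r * (max 1 (length I0)) ^ d \<and>
                   computes_within M (enc3 I0 q r) s I1 \<and> I1 \<in> inst P1 \<and>
                   (opt P0 I0 \<ge> real q \<longrightarrow> opt P1 I1 \<ge> real (f q)) \<and>
                   (opt P0 I0 < real (g r) \<longrightarrow> opt P1 I1 < real r))))"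

definition gap_decides_in ::
  "opt_problem \<Rightarrow> nat \<Rightarrow> nat \<Rightarrow> real \<Rightarrow> tm \<Rightarrow> real \<Rightarrow> bool" where
  "gap_decides_in P r q e M C \<longleftrightarrow>
     (\<forall>I\<in>inst P. \<exists>s. real s \<le> C * real (max 1 (length I)) powr e \<and>
        halts_within M (enc_word I) s \<and>
        (opt P I < real r \<longrightarrow> rejects_within M (enc_word I) s) \<and>
        (opt P I \<ge> real q \<longrightarrow> accepts_within M (enc_word I) s))"

definition weakly_inh_enum :: "(nat \<Rightarrow> real) \<Rightarrow> opt_problem \<Rightarrow> bool" where
  "weakly_inh_enum \<beta> P \<longleftrightarrow> filterlim \<beta> at_top sequentially \<and>
     (\<exists>r0::real. r0 > 0 \<and>
        (\<forall>q r::nat. r0 \<le> real r \<and> r \<le> q \<longrightarrow>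
           \<not> (\<exists>M C. tm_wf M \<and> gap_decides_in P r q (\<beta> r) M C)))"

end

theory Submission
  imports Defs
begin


definition nz :: "sym list \<Rightarrow> sym list" where "nz r = head_sym r # tl r"

lemma nz_Cons[simp]: "nz (a # r) = a # r" by (simp add: nz_def)
lemma nz_Nil[simp]: "nz [] = [Bl]" by (simp add: nz_def)

lemma step_some: "snd M q (head_sym r) = Some (q', b, d) \<Longrightarrow>
   tm_step M (q, l, r) = (let (l', r') = move d l (b # tl r) in (q', l', r'))"
  by simp

lemma step_R: "snd M q (head_sym r) = Some (q', b, R) \<Longrightarrow> tm_step M (q, l, r) = (q', b # l, tl r)"
  by (cases r) auto
lemma step_S: "snd M q (head_sym r) = Some (q', b, S) \<Longrightarrow> tm_step M (q, l, r) = (q', l, b # tl r)"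
  by (cases r) auto
lemma step_L: "snd M q (head_sym r) = Some (q', head_sym r, L) \<Longrightarrow> tm_step M (q, a # l, r) = (q', l, a # nz r)"
  by (cases r) (auto simp: nz_def)
lemma step_None: "halted M c \<Longrightarrow> tm_step M c = c"
  by (cases c) auto

lemma funpow_Suc': "(f ^^ Suc n) x = (f ^^ n) (f x)"
  by (metis comp_apply funpow_Suc_right)

lemma funpow_halted: "halted M c \<Longrightarrow> (tm_step M ^^ n) c = c"
  by (induction n) (auto simp: step_None)

lemma write_phase:
  assumes "\<forall>i<length v. \<forall>a. snd M (s+i) a = Some (Suc (s+i), v!i, R)"
  shows "(tm_step M ^^ length v) (s, l, []) = (s + length v, rev v @ l, [])"
  using assms
proof (induction v arbitrary: s l)
  case Nil then show ?case by simp
next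
  case (Cons x v)
  have h0: "snd M s Bl = Some (Suc s, x, R)" using Cons.prems by (metis add_0_right length_Cons nth_Cons_0 zero_less_Suc)
  have "tm_step M (s, l, []) = (Suc s, x # l, [])" using step_R[of M s "[]"] h0 by simp
  moreover have "\<forall>i<length v. \<forall>a. snd M (Suc s+i) a = Some (Suc (Suc s+i), v!i, R)"
    using Cons.prems by (metis add_Suc_right length_Cons nth_Cons_Suc Suc_less_eq add_Suc)
  ultimately show ?case using Cons.IH[of "Suc s" "x # l"] by (simp only: length_Cons funpow_Suc') simp
qed

lemma left_phase:
  assumes "\<forall>j<c. \<forall>a. snd M (s+j) a = Some (Suc (s+j), a, L)" "c \<le> length l"
  shows "(tm_step M ^^ c) (s, l, r) = (s + c, drop c l, rev (take c l) @ (if c = 0 then r else nz r))"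
  using assms
proof (induction c arbitrary: s l r)
  case 0 then show ?case by simp
next
  case (Suc c)
  obtain a l' where l: "l = a # l'" using Suc.prems(2) by (cases l) auto
  have h0: "snd M s (head_sym r) = Some (Suc s, head_sym r, L)" using Suc.prems(1) by (metis add_0_right zero_less_Suc)
  have st: "tm_step M (s, l, r) = (Suc s, l', a # nz r)" using step_L[OF h0] l by simp
  have h1: "\<forall>j<c. \<forall>a. snd M (Suc s+j) a = Some (Suc (Suc s+j), a, L)"
    using Suc.prems(1) by (metis Suc_less_eq add_Suc add_Suc_right)
  have "(tm_step M ^^ c) (Suc s, l', a # nz r) = (Suc s + c, drop c l', rev (take c l') @ (a # nz r))"
    using Suc.IH[OF h1] Suc.prems(2) l by simp
  then show ?case using st l by (simp only: funpow_Suc') simp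
qed

lemma scan_phase:
  assumes "\<forall>b. snd M s (Bit b) = Some (s, Bit b, R)"
  shows "(tm_step M ^^ length z) (s, l, map Bit z) = (s, rev (map Bit z) @ l, [])"
  using assms
proof (induction z arbitrary: l)
  case Nil then show ?case by simp
next
  case (Cons x z)
  have "tm_step M (s, l, map Bit (x # z)) = (s, Bit x # l, map Bit z)"
    using step_R[of M s "map Bit (x#z)"] Cons.prems by simp
  then show ?case using Cons.IH[OF Cons.prems, of "Bit x # l"] by (simp only: length_Cons funpow_Suc' list.map) simp
qed

lemma rewind_phase:
  assumes "\<forall>b. snd M s (Bit b) = Some (s, Bit b, L)"
  shows "(tm_step M ^^ Suc (length z)) (s, rev (m # map Bit z), Bit c # t) = (s, [], m # map Bit z @ Bit c # t)"
  using assms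
proof (induction z arbitrary: c t rule: rev_induct)
  case Nil
  have "tm_step M (s, [m], Bit c # t) = (s, [], m # Bit c # t)"
    using step_L[of M s "Bit c # t" s "m" "[]"] Nil.prems by simp
  then show ?case by simp
next
  case (snoc x z)
  have "tm_step M (s, rev (m # map Bit (z @ [x])), Bit c # t) = (s, rev (m # map Bit z), Bit x # Bit c # t)"
    using step_L[of M s "Bit c # t" s "Bit x" "rev (m # map Bit z)"] snoc.prems by simp
  then show ?case using snoc.IH[OF snoc.prems, of x "Bit c # t"] by (simp only: length_append_singleton funpow_Suc') simp
qed



definition tcomp :: "tm \<Rightarrow> tm \<Rightarrow> tm" where
  "tcomp A B = (fst A + fst B, \<lambda>q a. if q < fst A then
      (case snd A q a of None \<Rightarrow> Some (fst A, a, S) | Some x \<Rightarrow> Some x)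
     else map_option (\<lambda>(q', b, d). (q' + fst A, b, d)) (snd B (q - fst A) a))"

fun shift :: "nat \<Rightarrow> config \<Rightarrow> config" where
  "shift n (q, l, r) = (q + n, l, r)"

lemma shift_alt: "shift n c = (fst c + n, snd c)" by (cases c) auto

lemma wf_comp: "tm_wf A \<Longrightarrow> tm_wf B \<Longrightarrow> tm_wf (tcomp A B)"
proof -
  assume a: "tm_wf A" "tm_wf B"
  show ?thesis unfolding tm_wf_def
  proof (intro conjI allI impI)
    show "0 < fst (tcomp A B)" using a by (simp add: tm_wf_def tcomp_def)
  next
    fix q a' q' b d
    assume q: "q < fst (tcomp A B)" and e: "snd (tcomp A B) q a' = Some (q', b, d)"
    show "q' < fst (tcomp A B)"
    proof (cases "q < fst A")
      case True
      show ?thesis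
      proof (cases "snd A q a'")
        case None then show ?thesis using True e a by (simp add: tcomp_def tm_wf_def)
      next
        case (Some x)
        then have "snd A q a' = Some (q', b, d)" using True e by (simp add: tcomp_def)
        then have "q' < fst A" using a(1) True unfolding tm_wf_def by blast
        then show ?thesis by (simp add: tcomp_def)
      qed
    next
      case False
      then obtain q'' where e2: "snd B (q - fst A) a' = Some (q'', b, d)" "q' = q'' + fst A"
        using e by (auto simp: tcomp_def)
      have "q - fst A < fst B" using q False by (simp add: tcomp_def)
      then have "q'' < fst B" using a(2) e2(1) unfolding tm_wf_def by blast
      then show ?thesis using e2(2) by (simp add: tcomp_def)
    qed
  qed
qed

lemma step_comp_B: "tm_step (tcomp A B) (shift (fst A) c) = shift (fst A) (tm_step B c)"
proof -
  obtain q l r where c: "c = (q, l, r)" by (cases c)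
  show ?thesis unfolding c
    by (cases "snd B q (head_sym r)") (auto simp: tcomp_def case_prod_beta shift_alt)
qed

lemma funpow_comp_B: "(tm_step (tcomp A B) ^^ n) (shift (fst A) c) = shift (fst A) ((tm_step B ^^ n) c)"
  by (induction n) (auto simp: step_comp_B)

lemma halted_comp_B: "halted (tcomp A B) (shift (fst A) c) = halted B c"
  by (cases c) (auto simp: tcomp_def)

lemma step_comp_A: "q < fst A \<Longrightarrow> \<not> halted A (q, l, r) \<Longrightarrow> tm_step (tcomp A B) (q, l, r) = tm_step A (q, l, r)"
  by (auto simp: tcomp_def split: option.splits)

lemma wf_step: "tm_wf A \<Longrightarrow> fst c < fst A \<Longrightarrow> fst (tm_step A c) < fst A"
  by (cases c) (auto simp: tm_wf_def split: option.splits prod.splits)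

lemma funpow_comp_A:
  assumes "tm_wf A" "fst c < fst A" "\<forall>i<s. \<not> halted A ((tm_step A ^^ i) c)"
  shows "(tm_step (tcomp A B) ^^ s) c = (tm_step A ^^ s) c \<and> fst ((tm_step A ^^ s) c) < fst A"
  using assms(3)
proof (induction s)
  case 0 then show ?case using assms(2) by simp
next
  case (Suc s)
  then have IH: "(tm_step (tcomp A B) ^^ s) c = (tm_step A ^^ s) c" "fst ((tm_step A ^^ s) c) < fst A" by auto
  have nh: "\<not> halted A ((tm_step A ^^ s) c)" using Suc.prems by auto
  obtain q l r where e: "(tm_step A ^^ s) c = (q, l, r)" by (cases "(tm_step A ^^ s) c")
  show ?case using IH nh e step_comp_A[of q A l r B] wf_step[OF assms(1), of "(q,l,r)"] by simp
qed

lemma first_halt: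
  assumes "halted A ((tm_step A ^^ s) c)"
  shows "\<exists>s0\<le>s. (\<forall>i<s0. \<not> halted A ((tm_step A ^^ i) c)) \<and> (tm_step A ^^ s0) c = (tm_step A ^^ s) c"
proof -
  define s0 where "s0 = (LEAST i. halted A ((tm_step A ^^ i) c))"
  have h: "halted A ((tm_step A ^^ s0) c)" unfolding s0_def using assms by (rule LeastI)
  have le: "s0 \<le> s" unfolding s0_def using assms by (rule Least_le)
  have "\<forall>i<s0. \<not> halted A ((tm_step A ^^ i) c)" unfolding s0_def using not_less_Least by blast
  moreover have "(tm_step A ^^ s) c = (tm_step A ^^ s0) c"
  proof -
    have "(tm_step A ^^ s) c = (tm_step A ^^ (s - s0)) ((tm_step A ^^ s0) c)"
      using le by (metis funpow_add le_add_diff_inverse2 o_apply)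
    then show ?thesis using funpow_halted[OF h] by simp
  qed
  ultimately show ?thesis using le by auto
qed

lemma comp_handoff:
  assumes "tm_wf A" "fst c < fst A" "halted A ((tm_step A ^^ s) c)" "(tm_step A ^^ s) c = (q, l, r)"
  shows "\<exists>s0\<le>s. (tm_step (tcomp A B) ^^ Suc s0) c = shift (fst A) (0, l, nz r)"
proof -
  obtain s0 where s0: "s0 \<le> s" "\<forall>i<s0. \<not> halted A ((tm_step A ^^ i) c)" "(tm_step A ^^ s0) c = (q, l, r)"
    using first_halt[OF assms(3)] assms(4) by auto
  have a: "(tm_step (tcomp A B) ^^ s0) c = (q, l, r)" "q < fst A"
    using funpow_comp_A[OF assms(1,2) s0(2), of B] s0(3) by auto
  have hq: "snd A q (head_sym r) = None" using assms(3,4) by simp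
  have "snd (tcomp A B) q (head_sym r) = Some (fst A, head_sym r, S)"
    using a(2) hq by (simp add: tcomp_def)
  from step_S[OF this, of l] have "tm_step (tcomp A B) (q, l, r) = (fst A, l, nz r)"
    by (simp add: nz_def)
  then have "(tm_step (tcomp A B) ^^ Suc s0) c = (fst A, l, nz r)" using a(1) by (simp only: funpow.simps o_apply)
  then have "(tm_step (tcomp A B) ^^ Suc s0) c = shift (fst A) (0, l, nz r)" by simp
  then show ?thesis using s0(1) by blast
qed

definition cell :: "sym list \<Rightarrow> nat \<Rightarrow> sym" where
  "cell r i = (if i < length r then r ! i else Bl)"

definition teq :: "sym list \<Rightarrow> sym list \<Rightarrow> bool" where
  "teq r r' \<longleftrightarrow> (\<forall>i. cell r i = cell r' i)"

fun ceq :: "config \<Rightarrow> config \<Rightarrow> bool" where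
  "ceq (q, l, r) (q', l', r') \<longleftrightarrow> q = q' \<and> l = l' \<and> teq r r'"

lemma teq_head: "teq r r' \<Longrightarrow> head_sym r = head_sym r'"
proof -
  assume "teq r r'"
  then have "cell r 0 = cell r' 0" by (simp add: teq_def)
  then show ?thesis by (cases r; cases r') (auto simp: cell_def)
qed

lemma cell_tl: "cell (tl r) i = cell r (Suc i)"
  by (cases r) (auto simp: cell_def)

lemma teq_tl: "teq r r' \<Longrightarrow> teq (tl r) (tl r')"
  by (simp add: teq_def cell_tl)

lemma cell_Cons: "cell (a # r) i = (if i = 0 then a else cell r (i - 1))"
  by (cases i) (auto simp: cell_def)

lemma teq_Cons: "teq r r' \<Longrightarrow> teq (a # r) (a # r')"
  by (simp add: teq_def cell_Cons)

lemma teq_refl: "teq r r" by (simp add: teq_def)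

lemma teq_sym: "teq r r' \<Longrightarrow> teq r' r" by (simp add: teq_def)
lemma teq_trans: "teq r r' \<Longrightarrow> teq r' r'' \<Longrightarrow> teq r r''" by (simp add: teq_def)

lemma teq_nz: "teq (nz r) r"
  by (cases r) (auto simp: teq_def nz_def cell_def nth_Cons split: nat.splits)

lemma teq_blanks: "teq (r @ replicate k Bl) r"
  by (auto simp: teq_def cell_def nth_append)

lemma move_teq: "teq r r' \<Longrightarrow> move d l (b # r) = (l1, r1) \<Longrightarrow> move d l (b # r') = (l2, r2) \<Longrightarrow> l1 = l2 \<and> teq r1 r2"
  apply (cases d; cases l)
       apply (auto simp: teq_Cons)
  done

lemma step_ceq: "ceq c c' \<Longrightarrow> ceq (tm_step M c) (tm_step M c')"
proof -
  assume h: "ceq c c'"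
  obtain q l r where c: "c = (q, l, r)" by (cases c)
  obtain r' where c': "c' = (q, l, r')" "teq r r'" using h c by (cases c') auto
  have hd: "head_sym r = head_sym r'" using teq_head[OF c'(2)] .
  have tl: "teq (tl r) (tl r')" using teq_tl[OF c'(2)] .
  show ?thesis
  proof (cases "snd M q (head_sym r)")
    case None then show ?thesis using c c' hd by simp
  next
    case (Some x)
    obtain q' b d where x: "x = (q', b, d)" by (cases x)
    obtain l1 r1 where m1: "move d l (b # tl r) = (l1, r1)" by (cases "move d l (b # tl r)")
    obtain l2 r2 where m2: "move d l (b # tl r') = (l2, r2)" by (cases "move d l (b # tl r')")
    show ?thesis using Some x c c' hd m1 m2 move_teq[OF tl m1 m2] by simp
  qed
qed

lemma funpow_ceq: "ceq c c' \<Longrightarrow> ceq ((tm_step M ^^ n) c) ((tm_step M ^^ n) c')"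
  by (induction n) (auto simp: step_ceq)

lemma ceq_halted: "ceq c c' \<Longrightarrow> halted M c = halted M c'"
  by (cases c; cases c') (auto dest: teq_head)

lemma ceq_head: "ceq c c' \<Longrightarrow> head_sym (snd (snd c)) = head_sym (snd (snd c'))"
  by (cases c; cases c') (auto dest: teq_head)

lemma ceq_shift: "ceq c c' \<Longrightarrow> ceq (shift n c) (shift n c')"
  by (cases c; cases c') auto

lemma ceq_sym: "ceq c c' \<Longrightarrow> ceq c' c"
  by (cases c; cases c') (auto intro: teq_sym)

lemma ceq_trans: "ceq c c' \<Longrightarrow> ceq c' c'' \<Longrightarrow> ceq c c''"
  by (cases c; cases c'; cases c'') (auto intro: teq_trans)

lemma head_shift: "head_sym (snd (snd (shift n c))) = head_sym (snd (snd c))"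
  by (cases c) auto

fun tlen :: "config \<Rightarrow> nat" where "tlen (q, l, r) = length l + length r"

lemma tlen_alt: "tlen c = length (fst (snd c)) + length (snd (snd c))" by (cases c) auto

lemma step_tlen: "tlen (tm_step M c) \<le> Suc (tlen c)"
proof -
  obtain q l r where c: "c = (q, l, r)" by (cases c)
  show ?thesis
  proof (cases "snd M q (head_sym r)")
    case None then show ?thesis using c by simp
  next
    case (Some x)
    obtain q' b d where x: "x = (q', b, d)" by (cases x)
    have "length (fst (move d l (b # tl r))) + length (snd (move d l (b # tl r))) = length l + Suc (length (tl r))"
      by (cases "(d, l, b # tl r)" rule: move.cases) auto
    then show ?thesis using Some x c by (simp add: case_prod_beta tlen_alt)
  qed
qed

lemma funpow_tlen: "tlen ((tm_step M ^^ n) c) \<le> tlen c + n"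
proof (induction n)
  case 0 then show ?case by simp
next
  case (Suc n)
  have "tlen ((tm_step M ^^ Suc n) c) \<le> Suc (tlen ((tm_step M ^^ n) c))"
    using step_tlen[of M "(tm_step M ^^ n) c"] by simp
  then show ?case using Suc.IH by simp
qed



definition pre_delta :: "sym list \<Rightarrow> nat \<Rightarrow> sym \<Rightarrow> (nat \<times> sym \<times> dir) option" where
  "pre_delta u q a = (let k = length u in
     if q = 0 then (case a of Bit b \<Rightarrow> Some (1, if b then Bl else Hash, R) | Bl \<Rightarrow> Some (5 + 2*k, Hash, R) | Hash \<Rightarrow> None)
     else if q = 1 then (case a of Bit b \<Rightarrow> Some (1, Bit b, R) | Bl \<Rightarrow> Some (2, Hash, R) | Hash \<Rightarrow> None)
     else if q < 2 + k then Some (Suc q, u ! (q - 2), R)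
     else if q < 4 + 2*k then Some (Suc q, a, L)
     else if q = 4 + 2*k then (case a of Bit b \<Rightarrow> Some (4 + 2*k, Bit b, L) | Hash \<Rightarrow> Some (6 + 4*k, Bit False, S)
                                | Bl \<Rightarrow> Some (6 + 4*k, Bit True, S))
     else if q < 5 + 3*k then Some (Suc q, u ! (q - (5 + 2*k)), R)
     else if q < 6 + 4*k then Some (Suc q, a, L)
     else None)"

definition pre :: "sym list \<Rightarrow> tm" where
  "pre u = (7 + 4 * length u, pre_delta u)"

lemma wf_pre: "tm_wf (pre u)"
  unfolding tm_wf_def pre_def pre_delta_def Let_def
  by (auto split: sym.splits if_splits)

lemma pre_final: "halted (pre u) (6 + 4 * length u, l, r)"
  by (simp add: pre_def pre_delta_def Let_def)

lemma pre_empty: "(tm_step (pre u) ^^ (2 * length u + 2)) (0, [], []) = (6 + 4 * length u, [], Hash # u @ [Bl])"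
proof -
  let ?k = "length u"
  have s1: "tm_step (pre u) (0, [], []) = (5 + 2 * ?k, [Hash], [])"
    by (simp add: pre_def pre_delta_def Let_def)
  have w: "(tm_step (pre u) ^^ length u) (5 + 2 * ?k, [Hash], []) = (5 + 3 * ?k, rev u @ [Hash], [])"
    using write_phase[of u "pre u" "5 + 2 * ?k" "[Hash]"] by (simp add: pre_def pre_delta_def Let_def)
  have l: "(tm_step (pre u) ^^ Suc ?k) (5 + 3 * ?k, rev u @ [Hash], []) = (6 + 4 * ?k, [], Hash # u @ [Bl])"
    using left_phase[of "Suc ?k" "pre u" "5 + 3 * ?k" "rev u @ [Hash]" "[]"] by (simp add: pre_def pre_delta_def Let_def)
  have "2 * ?k + 2 = Suc ?k + (?k + 1)" by simp
  then have "(tm_step (pre u) ^^ (2 * ?k + 2)) (0, [], []) = (tm_step (pre u) ^^ Suc ?k) ((tm_step (pre u) ^^ ?k) ((tm_step (pre u) ^^ 1) (0, [], [])))"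
    by (simp only: funpow_add o_apply)
  then show ?thesis using s1 w l by simp
qed

lemma funpow_1: "(f ^^ 1) = (f :: 'a \<Rightarrow> 'a)" by simp

definition mk :: "bool \<Rightarrow> sym" where "mk b = (if b then Bl else Hash)"

lemma pre_prefix: "(tm_step (pre u) ^^ (length x' + 2 + length u)) (0, [], map Bit (b # x'))
   = (2 + length u, rev (mk b # map Bit x' @ Hash # u), [])"
proof -
  let ?k = "length u" and ?M = "pre u"
  have s1: "tm_step ?M (0, [], map Bit (b # x')) = (1, [mk b], map Bit x')"
    by (simp add: pre_def pre_delta_def Let_def mk_def)
  have sc: "(tm_step ?M ^^ length x') (1, [mk b], map Bit x') = (1, rev (map Bit x') @ [mk b], [])"
    using scan_phase[of ?M 1 x' "[mk b]"] by (simp add: pre_def pre_delta_def Let_def)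
  have s2: "tm_step ?M (1, rev (map Bit x') @ [mk b], []) = (2, Hash # rev (map Bit x') @ [mk b], [])"
    by (simp add: pre_def pre_delta_def Let_def)
  have w: "(tm_step ?M ^^ ?k) (2, Hash # rev (map Bit x') @ [mk b], []) = (2 + ?k, rev u @ Hash # rev (map Bit x') @ [mk b], [])"
    using write_phase[of u ?M 2 "Hash # rev (map Bit x') @ [mk b]"] by (simp add: pre_def pre_delta_def Let_def)
  have "length x' + 2 + ?k = ?k + (1 + (length x' + 1))" by simp
  then have "(tm_step ?M ^^ (length x' + 2 + ?k)) (0, [], map Bit (b # x')) =
     (tm_step ?M ^^ ?k) ((tm_step ?M ^^ 1) ((tm_step ?M ^^ length x') ((tm_step ?M ^^ 1) (0, [], map Bit (b # x')))))"
    by (simp only: funpow_add o_apply)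
  then show ?thesis using s1 sc s2 w by simp
qed

lemma pre_nonempty: "\<exists>s\<le>2 * length x + 2 * length u + 6.
   (tm_step (pre u) ^^ s) (0, [], map Bit x) = (6 + 4 * length u, [], map Bit x @ Hash # u @ [Bl])"
  if xne: "x \<noteq> []"
proof -
  let ?k = "length u" and ?M = "pre u"
  obtain b x' where x: "x = b # x'" using xne by (cases x) auto
  have P: "(tm_step ?M ^^ (length x' + 2 + ?k)) (0, [], map Bit x) = (2 + ?k, rev (mk b # map Bit x' @ Hash # u), [])"
    using pre_prefix x by simp
  have lp: "\<forall>j<?k + 2. \<forall>a. snd ?M (2 + ?k + j) a = Some (Suc (2 + ?k + j), a, L)"
    by (simp add: pre_def pre_delta_def Let_def)
  have rs: "tm_step ?M (4 + 2 * ?k, [], mk b # t) = (6 + 4 * ?k, [], Bit b # t)" for t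
    by (cases b) (simp_all add: pre_def pre_delta_def Let_def mk_def)
  show ?thesis
  proof (cases x' rule: rev_cases)
    case Nil
    have L: "(tm_step ?M ^^ (?k + 2)) (2 + ?k, rev (mk b # map Bit x' @ Hash # u), []) = (4 + 2 * ?k, [], mk b # Hash # u @ [Bl])"
      using left_phase[OF lp, of "rev (mk b # map Bit x' @ Hash # u)" "[]"] Nil by simp
    have "(tm_step ?M ^^ (1 + (?k + 2) + (length x' + 2 + ?k))) (0, [], map Bit x) =
       tm_step ?M ((tm_step ?M ^^ (?k + 2)) ((tm_step ?M ^^ (length x' + 2 + ?k)) (0, [], map Bit x)))"
      by (simp only: funpow_add o_apply funpow_1)
    also have "\<dots> = (6 + 4 * ?k, [], map Bit x @ Hash # u @ [Bl])" using P L rs x Nil by simp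
    finally show ?thesis using x Nil by (intro exI[of _ "1 + (?k + 2) + (length x' + 2 + ?k)"]) simp
  next
    case (snoc y c)
    have L: "(tm_step ?M ^^ (?k + 2)) (2 + ?k, rev (mk b # map Bit x' @ Hash # u), []) = (4 + 2 * ?k, rev (mk b # map Bit y), Bit c # Hash # u @ [Bl])"
      using left_phase[OF lp, of "rev (mk b # map Bit x' @ Hash # u)" "[]"] snoc by simp
    have rw: "\<forall>b. snd ?M (4 + 2 * ?k) (Bit b) = Some (4 + 2 * ?k, Bit b, L)"
      by (simp add: pre_def pre_delta_def Let_def)
    have W: "(tm_step ?M ^^ Suc (length y)) (4 + 2 * ?k, rev (mk b # map Bit y), Bit c # Hash # u @ [Bl])
        = (4 + 2 * ?k, [], mk b # map Bit y @ Bit c # Hash # u @ [Bl])"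
      using rewind_phase[OF rw] by blast
    have "(tm_step ?M ^^ (1 + Suc (length y) + (?k + 2) + (length x' + 2 + ?k))) (0, [], map Bit x) =
       tm_step ?M ((tm_step ?M ^^ Suc (length y)) ((tm_step ?M ^^ (?k + 2)) ((tm_step ?M ^^ (length x' + 2 + ?k)) (0, [], map Bit x))))"
      by (simp only: funpow_add o_apply funpow_1)
    also have "\<dots> = (6 + 4 * ?k, [], map Bit x @ Hash # u @ [Bl])" using P L W rs x snoc by simp
    finally show ?thesis using x snoc by (intro exI[of _ "1 + Suc (length y) + (?k + 2) + (length x' + 2 + ?k)"]) simp
  qed
qed

lemma pre_run: "\<exists>s\<le>2 * length x + 2 * length u + 6.
   (tm_step (pre u) ^^ s) (0, [], map Bit x) = (6 + 4 * length u, [], map Bit x @ Hash # u @ [Bl])"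
proof (cases "x = []")
  case True
  then show ?thesis using pre_empty[of u] by (intro exI[of _ "2 * length u + 2"]) simp
next
  case False then show ?thesis by (rule pre_nonempty)
qed



lemma enc3_alt: "enc3 I q r = map Bit I @ Hash # (map Bit (bin q) @ Hash # map Bit (bin r))"
  by (simp add: enc3_def enc2_def)

lemma accepts_alt: "accepts_within M x t \<longleftrightarrow> halts_within M x t \<and> head_sym (snd (snd (conf M x t))) = Bit True"
  unfolding accepts_within_def by (cases "conf M x t") auto

lemma rejects_alt: "rejects_within M x t \<longleftrightarrow> halts_within M x t \<and> head_sym (snd (snd (conf M x t))) \<noteq> Bit True"
  unfolding rejects_within_def by (cases "conf M x t") auto

lemma wf_pos: "tm_wf M \<Longrightarrow> 0 < fst M" by (simp add: tm_wf_def)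

lemma output_len:
  assumes "computes_within M x s y"
  shows "length y \<le> length x + s"
proof -
  obtain q l r where c: "conf M x s = (q, l, r)" by (cases "conf M x s")
  then obtain k where r: "r = map Bit y @ replicate k Bl" using assms by (auto simp: computes_within_def)
  have "tlen (conf M x s) \<le> tlen (0, [], x) + s" unfolding conf_def by (rule funpow_tlen)
  then show ?thesis using c r by simp
qed

lemma compose_run:
  assumes wfM: "tm_wf M" and wfM1: "tm_wf M1"
    and cw: "computes_within M (map Bit I0 @ Hash # u) s I1"
    and h1: "halts_within M1 (enc_word I1) s1"
  shows "\<exists>T \<le> 2 * length I0 + 2 * length u + 8 + s + s1.
     halted (tcomp (pre u) (tcomp M M1)) (conf (tcomp (pre u) (tcomp M M1)) (enc_word I0) T) \<and>
     head_sym (snd (snd (conf (tcomp (pre u) (tcomp M M1)) (enc_word I0) T))) = head_sym (snd (snd (conf M1 (enc_word I1) s1)))"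
proof -
  let ?P = "pre u" and ?MM = "tcomp M M1"
  let ?M0 = "tcomp ?P ?MM"
  let ?E = "map Bit I0 @ Hash # u"
  let ?c = "(0::nat, [] :: sym list, map Bit I0)"
  obtain sP where sP: "sP \<le> 2 * length I0 + 2 * length u + 6"
    "(tm_step ?P ^^ sP) ?c = (6 + 4 * length u, [], ?E @ [Bl])"
    using pre_run[of I0 u] by auto
  obtain s0P where s0P: "s0P \<le> sP" "(tm_step ?M0 ^^ Suc s0P) ?c = shift (fst ?P) (0, [], nz (?E @ [Bl]))"
  proof -
    have hP: "halted ?P ((tm_step ?P ^^ sP) ?c)" unfolding sP(2) by (rule pre_final)
    have f0: "fst ?c < fst ?P" by (simp add: pre_def)
    show ?thesis using comp_handoff[OF wf_pre f0 hP sP(2), of ?MM] that by blast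
  qed
  have nzE: "nz (?E @ [Bl]) = ?E @ [Bl]" by (cases I0) auto
  obtain qM k where cM: "(tm_step M ^^ s) (0, [], ?E) = (qM, [], map Bit I1 @ replicate k Bl)"
    "halted M ((tm_step M ^^ s) (0, [], ?E))"
    using cw unfolding computes_within_def halts_within_def conf_def
    by (auto split: prod.splits)
  obtain s0M where s0M: "s0M \<le> s" "(tm_step ?MM ^^ Suc s0M) (0, [], ?E) = shift (fst M) (0, [], nz (map Bit I1 @ replicate k Bl))"
    using comp_handoff[of M "(0, [], ?E)" s qM "[]" _ M1] wfM wf_pos[OF wfM] cM by auto
  define X where "X = (tm_step M1 ^^ s1) (0, [], nz (map Bit I1 @ replicate k Bl))"
  have X1: "ceq X (conf M1 (enc_word I1) s1)"
    unfolding X_def conf_def enc_word_def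
    by (rule funpow_ceq) (simp add: teq_trans[OF teq_nz teq_blanks])
  have MMrun: "(tm_step ?MM ^^ (s1 + Suc s0M)) (0, [], ?E) = shift (fst M) X"
    unfolding X_def using s0M(2) funpow_comp_B[of s1 M M1]
    by (simp only: funpow_add o_apply)
  have ceqE: "ceq (0, [], ?E @ [Bl]) (0, [], ?E)"
    using teq_blanks[of ?E 1] by simp
  define Y where "Y = (tm_step ?MM ^^ (s1 + Suc s0M)) (0, [], ?E @ [Bl])"
  have Y1: "ceq Y (shift (fst M) X)" unfolding Y_def MMrun[symmetric] by (rule funpow_ceq[OF ceqE])
  define T where "T = (s1 + Suc s0M) + Suc s0P"
  have confT: "conf ?M0 (enc_word I0) T = shift (fst ?P) Y"
  proof -
    have "conf ?M0 (enc_word I0) T = (tm_step ?M0 ^^ (s1 + Suc s0M)) ((tm_step ?M0 ^^ Suc s0P) ?c)"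
      unfolding conf_def T_def enc_word_def by (simp only: funpow_add o_apply)
    also have "\<dots> = shift (fst ?P) Y" unfolding s0P(2) nzE Y_def by (rule funpow_comp_B)
    finally show ?thesis .
  qed
  have hX: "halted M1 X" using ceq_halted[OF X1] h1 by (simp add: halts_within_def)
  have "halted ?M0 (conf ?M0 (enc_word I0) T)"
    unfolding confT halted_comp_B ceq_halted[OF Y1] halted_comp_B using hX .
  moreover have "head_sym (snd (snd (conf ?M0 (enc_word I0) T))) = head_sym (snd (snd (conf M1 (enc_word I1) s1)))"
    unfolding confT head_shift ceq_head[OF Y1] ceq_head[OF X1] ..
  moreover have "T \<le> 2 * length I0 + 2 * length u + 8 + s + s1" using T_def s0P sP s0M by simp
  ultimately show ?thesis by blast
qed



lemma bound_lemma:
  fixes n B tR sR U L1 C s1R TR :: real and d :: nat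
  assumes n1: "1 \<le> n" and dB: "real d + 1 \<le> B" and sR: "sR \<le> tR * n ^ d" and t0: "0 \<le> tR"
    and L1: "L1 \<le> n + U + 2 + sR" and U0: "0 \<le> U" and L11: "1 \<le> L1"
    and s1: "s1R \<le> C * L1 powr (B / (real d + 1))"
    and T: "TR \<le> 2 * n + 2 * U + 8 + sR + s1R"
  shows "TR \<le> ((2 * U + 10 + tR) + \<bar>C\<bar> * (U + 3 + tR) powr (B / (real d + 1))) * n powr B"
proof -
  define P where "P = n ^ (d + 1)"
  have n0: "0 < n" using n1 by simp
  have P1: "1 \<le> P" unfolding P_def by (rule one_le_power[OF n1])
  have nP: "n \<le> P" unfolding P_def using n1 by (metis power_increasing le_add2 power_one_right)
  have ndP: "n ^ d \<le> P" unfolding P_def using n1 by (simp add: power_increasing)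
  have tP: "tR * n ^ d \<le> tR * P" using ndP t0 by (simp add: mult_left_mono)
  have PB: "P \<le> n powr B"
  proof -
    have "P = n powr (real (d + 1))" unfolding P_def using powr_realpow[OF n0, of "d+1"] by simp
    also have "\<dots> \<le> n powr B" using n1 dB by (intro powr_mono) auto
    finally show ?thesis .
  qed
  have e0: "0 \<le> B / (real d + 1)" using dB by simp
  have L1P: "L1 \<le> (U + 3 + tR) * P"
  proof -
    have "L1 \<le> P + (U + 2) * P + tR * P"
      using L1 sR tP nP P1 U0 by (smt (verit) mult_le_cancel_left1 mult_nonneg_nonneg)
    then show ?thesis by (simp add: algebra_simps)
  qed
  have Ppow: "P powr (B / (real d + 1)) = n powr B"
  proof -
    have "P powr (B / (real d + 1)) = (n powr (real d + 1)) powr (B / (real d + 1))"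
      unfolding P_def using powr_realpow[OF n0, of "d+1"] by (simp add: add.commute)
    also have "\<dots> = n powr B" by (simp add: powr_powr)
    finally show ?thesis .
  qed
  have Lpow: "L1 powr (B / (real d + 1)) \<le> (U + 3 + tR) powr (B / (real d + 1)) * n powr B"
  proof -
    have "L1 powr (B / (real d + 1)) \<le> ((U + 3 + tR) * P) powr (B / (real d + 1))"
      using L1P L11 e0 by (intro powr_mono2) auto
    also have "\<dots> = (U + 3 + tR) powr (B / (real d + 1)) * P powr (B / (real d + 1))"
      using U0 t0 P1 by (intro powr_mult)
    finally show ?thesis using Ppow by simp
  qed
  have s1b: "s1R \<le> \<bar>C\<bar> * ((U + 3 + tR) powr (B / (real d + 1)) * n powr B)"
  proof -
    have "C * L1 powr (B / (real d + 1)) \<le> \<bar>C\<bar> * L1 powr (B / (real d + 1))"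
      by (intro mult_right_mono) auto
    also have "\<dots> \<le> \<bar>C\<bar> * ((U + 3 + tR) powr (B / (real d + 1)) * n powr B)"
      using Lpow by (intro mult_left_mono) auto
    finally show ?thesis using s1 by simp
  qed
  have "2 * n + 2 * U + 8 + sR \<le> (2 * U + 10 + tR) * P"
  proof -
    have "2 * n + 2 * U + 8 + sR \<le> 2 * P + (2 * U + 8) * P + tR * P"
      using sR tP nP P1 U0 by (smt (verit) mult_le_cancel_left1 mult_nonneg_nonneg)
    then show ?thesis by (simp add: algebra_simps)
  qed
  also have "\<dots> \<le> (2 * U + 10 + tR) * n powr B" using PB U0 t0 by (intro mult_left_mono) auto
  finally show ?thesis using T s1b by (simp add: algebra_simps)
qed



theorem proposition3:
  fixes f g :: "nat \<Rightarrow> nat" and \<beta> :: "nat \<Rightarrow> real" and P0 P1 :: opt_problem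
  assumes "filterlim f at_top sequentially"
    and "filterlim g at_top sequentially"
    and "filterlim \<beta> at_top sequentially"
    and "fpt_gap_reducible f g P0 P1"
    and "weakly_inh_enum \<beta> P0"
  shows "\<exists>c::real. c > 0 \<and> weakly_inh_enum (\<lambda>r. c * \<beta> (g r)) P1"
proof -
  from assms(4) obtain M t d where wfM: "tm_wf M" and H: "\<forall>I0\<in>inst P0. \<forall>q r. 0 < q \<longrightarrow> 0 < r \<longrightarrow>
           (\<exists>I1 s. s \<le> t q r * (max 1 (length I0)) ^ d \<and>
                   computes_within M (enc3 I0 q r) s I1 \<and> I1 \<in> inst P1 \<and>
                   (opt P0 I0 \<ge> real q \<longrightarrow> opt P1 I1 \<ge> real (f q)) \<and>
                   (opt P0 I0 < real (g r) \<longrightarrow> opt P1 I1 < real r))"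
    unfolding fpt_gap_reducible_def by blast
  from assms(5) obtain r0 :: real where r0: "r0 > 0" and W: "\<forall>q r::nat. r0 \<le> real r \<and> r \<le> q \<longrightarrow>
           \<not> (\<exists>M C. tm_wf M \<and> gap_decides_in P0 r q (\<beta> r) M C)"
    unfolding weakly_inh_enum_def by blast
  define c where "c = 1 / (real d + 1)"
  have cpos: "c > 0" unfolding c_def by simp
  have bg: "filterlim (\<lambda>r. \<beta> (g r)) at_top sequentially"
    using filterlim_compose[OF assms(3) assms(2)] .
  have lim: "filterlim (\<lambda>r. c * \<beta> (g r)) at_top sequentially"
    by (rule filterlim_tendsto_pos_mult_at_top[OF tendsto_const cpos bg])
  have ev1: "eventually (\<lambda>r. nat \<lceil>r0\<rceil> \<le> g r) sequentially"
    using assms(2) unfolding filterlim_at_top by blast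
  have ev2: "eventually (\<lambda>r. real d + 1 \<le> \<beta> (g r)) sequentially"
    using bg unfolding filterlim_at_top by blast
  obtain N where N: "\<And>r. r \<ge> N \<Longrightarrow> nat \<lceil>r0\<rceil> \<le> g r \<and> real d + 1 \<le> \<beta> (g r)"
    using eventually_conj[OF ev1 ev2] unfolding eventually_sequentially by blast
  have main: "\<not> (\<exists>M C. tm_wf M \<and> gap_decides_in P1 r q (c * \<beta> (g r)) M C)"
    if qr: "real (N + 1) \<le> real r" "r \<le> q" for q r
  proof
    assume "\<exists>M C. tm_wf M \<and> gap_decides_in P1 r q (c * \<beta> (g r)) M C"
    then obtain M1 C where wf1: "tm_wf M1" and G: "gap_decides_in P1 r q (c * \<beta> (g r)) M1 C" by blast
    have rN: "r \<ge> N" and rpos: "0 < r" using qr by auto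
    have gr: "r0 \<le> real (g r)"
    proof -
      have "nat \<lceil>r0\<rceil> \<le> g r" using N[OF rN] by blast
      then show ?thesis by linarith
    qed
    have dB: "real d + 1 \<le> \<beta> (g r)" using N[OF rN] by blast
    obtain Qf where Qf: "\<And>Q. Q \<ge> Qf \<Longrightarrow> q \<le> f Q"
      using assms(1) unfolding filterlim_at_top eventually_sequentially by blast
    define Q0 where "Q0 = max (max Qf (g r)) 1"
    have Q0pos: "0 < Q0" and Q0f: "q \<le> f Q0" and Q0g: "g r \<le> Q0"
      unfolding Q0_def using Qf by auto
    define u where "u = map Bit (bin Q0) @ Hash # map Bit (bin r)"
    define M0 where "M0 = tcomp (pre u) (tcomp M M1)"
    define e where "e = \<beta> (g r) / (real d + 1)"
    have ce: "c * \<beta> (g r) = e" unfolding c_def e_def by simp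
    define U where "U = real (length u)"
    define tR where "tR = real (t Q0 r)"
    define C0 where "C0 = (2 * U + 10 + tR) + \<bar>C\<bar> * (U + 3 + tR) powr e"
    have wf0: "tm_wf M0" unfolding M0_def by (intro wf_comp wf_pre wfM wf1)
    have "gap_decides_in P0 (g r) Q0 (\<beta> (g r)) M0 C0"
      unfolding gap_decides_in_def
    proof
      fix I0 assume I0: "I0 \<in> inst P0"
      obtain I1 s where sb: "s \<le> t Q0 r * (max 1 (length I0)) ^ d"
        and cw: "computes_within M (enc3 I0 Q0 r) s I1" and I1: "I1 \<in> inst P1"
        and imp1: "opt P0 I0 \<ge> real Q0 \<longrightarrow> opt P1 I1 \<ge> real (f Q0)"
        and imp2: "opt P0 I0 < real (g r) \<longrightarrow> opt P1 I1 < real r"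
        using H I0 Q0pos rpos by blast
      have cw': "computes_within M (map Bit I0 @ Hash # u) s I1" using cw unfolding u_def enc3_alt .
      obtain s1 where s1b: "real s1 \<le> C * real (max 1 (length I1)) powr e"
        and h1: "halts_within M1 (enc_word I1) s1"
        and rej1: "opt P1 I1 < real r \<longrightarrow> rejects_within M1 (enc_word I1) s1"
        and acc1: "opt P1 I1 \<ge> real q \<longrightarrow> accepts_within M1 (enc_word I1) s1"
        using G I1 unfolding gap_decides_in_def ce by blast
      obtain T where Tb: "T \<le> 2 * length I0 + 2 * length u + 8 + s + s1"
        and hT: "halted M0 (conf M0 (enc_word I0) T)"
        and hdT: "head_sym (snd (snd (conf M0 (enc_word I0) T))) = head_sym (snd (snd (conf M1 (enc_word I1) s1)))"
        using compose_run[OF wfM wf1 cw' h1] unfolding M0_def by blast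
      have lenI1: "length I1 \<le> length (map Bit I0 @ Hash # u) + s" by (rule output_len[OF cw'])
      define n where "n = real (max 1 (length I0))"
      have n1: "1 \<le> n" unfolding n_def by simp
      have sR: "real s \<le> tR * n ^ d"
      proof -
        have "real s \<le> real (t Q0 r * (max 1 (length I0)) ^ d)" using sb by (simp only: of_nat_le_iff)
        then show ?thesis unfolding tR_def n_def by simp
      qed
      have L1: "real (max 1 (length I1)) \<le> n + U + 2 + real s"
        using lenI1 unfolding n_def U_def by simp
      have bnd: "real T \<le> C0 * n powr \<beta> (g r)"
        unfolding C0_def e_def
      proof (rule bound_lemma[OF n1 dB sR _ L1 _ _ s1b[unfolded e_def]])
        show "0 \<le> tR" unfolding tR_def by simp
        show "0 \<le> U" unfolding U_def by simp
        show "1 \<le> real (max 1 (length I1))" by simp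
        show "real T \<le> 2 * n + 2 * U + 8 + real s + real s1"
          using Tb unfolding n_def U_def by simp
      qed
      show "\<exists>s. real s \<le> C0 * real (max 1 (length I0)) powr \<beta> (g r) \<and>
        halts_within M0 (enc_word I0) s \<and>
        (opt P0 I0 < real (g r) \<longrightarrow> rejects_within M0 (enc_word I0) s) \<and>
        (opt P0 I0 \<ge> real Q0 \<longrightarrow> accepts_within M0 (enc_word I0) s)"
      proof (intro exI[of _ T] conjI impI)
        show "real T \<le> C0 * real (max 1 (length I0)) powr \<beta> (g r)" using bnd unfolding n_def .
        show hw: "halts_within M0 (enc_word I0) T" using hT by (simp add: halts_within_def)
        show "rejects_within M0 (enc_word I0) T" if "opt P0 I0 < real (g r)"
          using rej1 imp2 that hw hdT by (simp add: rejects_alt)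
        show "accepts_within M0 (enc_word I0) T" if "opt P0 I0 \<ge> real Q0"
        proof -
          have "opt P1 I1 \<ge> real q" using imp1 that Q0f by (meson of_nat_le_iff order_trans)
          then show ?thesis using acc1 hw hdT by (simp add: accepts_alt)
        qed
      qed
    qed
    then show False using W gr Q0g wf0 by blast
  qed
  show ?thesis
    unfolding weakly_inh_enum_def
    using cpos lim main by (intro exI[of _ c] conjI exI[of _ "real (N + 1)"]) auto
qed


end
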